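(* Let $(M,d)$ be a complete pointed metric space and let $\mu,\nu$ be positive Radon measures on $\beta\widetilde{M}$. Then $\mu\preccurlyeq\nu$ and $\nu\preccurlyeq\mu$ if and only if $q_\sharp\mu=q_\sharp\nu$.
   Context: $\widetilde{M}=\{(x,y)\in M\times M:x\ne y\}$, $\beta\widetilde{M}$ its Stone–Čech compactification; Radon measures identified with $C(\beta\widetilde{M})^*$. $G$ is the set of $g\in C(\beta\widetilde{M})$ with $d(x,y)g(x,y)\le d(x,u)g(x,u)+d(u,y)g(u,y)$ for all distinct $x,u,y\in M$; $\mu\preccurlyeq\nu$ iff $\int g\,d\mu\le\int g\,d\nu$ for all $g\in G$. Define $\zeta\sim\omega$ on $\beta\widetilde{M}$ iff $g(\zeta)=g(\omega)$ for all $g\in G$; $\widetilde{M}^G=\beta\widetilde{M}/\!\sim$ with the quotient topology (compact Hausdorff), $q:\beta\widetilde{M}\to\widetilde{M}^G$ the quotient map, and $q_\sharp$ the pushforward of measures. Throughout, $M$ has at least three distinct points. *)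

theory Defs
  imports "HOL-Analysis.Analysis"
begin

text \<open>Off-diagonal set of pairs of distinct points of M (here M is the type 'a).\<close>
definition Mtilde :: "('a \<times> 'a) set" where
  "Mtilde = {(x, y). x \<noteq> y}"

text \<open>Bounded continuous real functions on Mtilde (Mtilde carries the subspace
  topology of the product metric).\<close>
definition Cb :: "(('a::metric_space \<times> 'a) \<Rightarrow> real) set" where
  "Cb = {f. continuous_on Mtilde f \<and> bounded (f ` Mtilde)}"

definition ev :: "('a::metric_space \<times> 'a) \<Rightarrow> ((('a \<times> 'a) \<Rightarrow> real) \<Rightarrow> real)" where
  "ev p = restrict (\<lambda>f. f p) Cb"

text \<open>The Stone-Cech compactification beta Mtilde, realised in the standard way as the
  closure of the image of the evaluation embedding in the product space.\<close>
definition betaM :: "((('a::metric_space \<times> 'a) \<Rightarrow> real) \<Rightarrow> real) topology" where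
  "betaM = subtopology (product_topology (\<lambda>_. euclideanreal) Cb)
      ((product_topology (\<lambda>_. euclideanreal) Cb) closure_of (ev ` Mtilde))"

definition Cbeta :: "(((('a::metric_space \<times> 'a) \<Rightarrow> real) \<Rightarrow> real) \<Rightarrow> real) set" where
  "Cbeta = {g. continuous_map betaM euclideanreal g}"

text \<open>Positive Radon measures on a compact Hausdorff space X, identified (Riesz) with
  positive linear functionals on C(X).\<close>
definition positive_radon :: "'b topology \<Rightarrow> (('b \<Rightarrow> real) \<Rightarrow> real) \<Rightarrow> bool" where
  "positive_radon X L \<longleftrightarrow>
     (\<forall>f g. continuous_map X euclideanreal f \<longrightarrow> continuous_map X euclideanreal g \<longrightarrow>
        L (\<lambda>x. f x + g x) = L f + L g) \<and>
     (\<forall>c f. continuous_map X euclideanreal f \<longrightarrow> L (\<lambda>x. c * f x) = c * L f) \<and>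
     (\<forall>f. continuous_map X euclideanreal f \<longrightarrow> (\<forall>x\<in>topspace X. 0 \<le> f x) \<longrightarrow> 0 \<le> L f)"

definition Gset :: "(((('a::metric_space \<times> 'a) \<Rightarrow> real) \<Rightarrow> real) \<Rightarrow> real) set" where
  "Gset = {g \<in> Cbeta. \<forall>x u y. x \<noteq> u \<and> u \<noteq> y \<and> x \<noteq> y \<longrightarrow>
      dist x y * g (ev (x, y)) \<le> dist x u * g (ev (x, u)) + dist u y * g (ev (u, y))}"

definition preceq ::
  "((((('a::metric_space \<times> 'a) \<Rightarrow> real) \<Rightarrow> real) \<Rightarrow> real) \<Rightarrow> real) \<Rightarrow>
   ((((('a \<times> 'a) \<Rightarrow> real) \<Rightarrow> real) \<Rightarrow> real) \<Rightarrow> real) \<Rightarrow> bool" where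
  "preceq \<mu> \<nu> \<longleftrightarrow> (\<forall>g\<in>Gset. \<mu> g \<le> \<nu> g)"

definition Gequiv :: "((('a::metric_space \<times> 'a) \<Rightarrow> real) \<Rightarrow> real) \<Rightarrow> ((('a \<times> 'a) \<Rightarrow> real) \<Rightarrow> real) \<Rightarrow> bool" where
  "Gequiv \<zeta> \<omega> \<longleftrightarrow> (\<forall>g\<in>Gset. g \<zeta> = g \<omega>)"

definition qmap :: "((('a::metric_space \<times> 'a) \<Rightarrow> real) \<Rightarrow> real) \<Rightarrow> ((('a \<times> 'a) \<Rightarrow> real) \<Rightarrow> real) set" where
  "qmap \<zeta> = {\<omega> \<in> topspace betaM. Gequiv \<zeta> \<omega>}"

definition quotient_top :: "'b topology \<Rightarrow> ('b \<Rightarrow> 'c) \<Rightarrow> 'c topology" where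
  "quotient_top X f = topology (\<lambda>U. U \<subseteq> f ` topspace X \<and> openin X {x \<in> topspace X. f x \<in> U})"

definition MG :: "(((('a::metric_space \<times> 'a) \<Rightarrow> real) \<Rightarrow> real) set) topology" where
  "MG = quotient_top betaM qmap"

definition push :: "((((('a::metric_space \<times> 'a) \<Rightarrow> real) \<Rightarrow> real) \<Rightarrow> real) \<Rightarrow> real) \<Rightarrow>
    ((((('a \<times> 'a) \<Rightarrow> real) \<Rightarrow> real) set \<Rightarrow> real) \<Rightarrow> real)" where
  "push \<mu> f = \<mu> (f \<circ> qmap)"

end

theory Submission
  imports Defs
begin

lemma betaM_compact: "compactin betaM (topspace betaM)"
proof -
  define P where "P = product_topology (\<lambda>_::(('a::metric_space \<times> 'a) \<Rightarrow> real). euclideanreal) Cb"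
  define B where "B = (\<lambda>f::('a \<times> 'a) \<Rightarrow> real. SOME b. \<forall>p\<in>Mtilde. \<bar>f p\<bar> \<le> b)"
  define K where "K = PiE Cb (\<lambda>f. {- B f .. B f})"
  have B: "\<bar>f p\<bar> \<le> B f" if "f \<in> Cb" "p \<in> Mtilde" for f p
  proof -
    have "\<exists>b. \<forall>p\<in>Mtilde. \<bar>f p\<bar> \<le> b" using that(1) unfolding Cb_def bounded_real by auto
    then have "\<forall>p\<in>Mtilde. \<bar>f p\<bar> \<le> B f" unfolding B_def by (rule someI_ex)
    then show ?thesis using that(2) by blast
  qed
  have cK: "compactin P K" unfolding P_def K_def by (simp add: compactin_PiE)
  have clK: "closedin P K"
    by (rule compactin_imp_closedin[OF _ cK]) (simp add: P_def Hausdorff_space_product_topology)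
  have sub: "ev ` Mtilde \<subseteq> K"
  proof -
    have B': "- B f \<le> f p \<and> f p \<le> B f" if "f \<in> Cb" "p \<in> Mtilde" for f p
      using B[OF that] by linarith
    have "ev p \<in> K" if p: "p \<in> Mtilde" for p
      unfolding K_def ev_def restrict_PiE_iff atLeastAtMost_iff using B' p by blast
    then show ?thesis by blast
  qed
  have "P closure_of (ev ` Mtilde) \<subseteq> K" by (rule closure_of_minimal[OF sub clK])
  then have "compactin P (P closure_of (ev ` Mtilde))"
    by (rule closed_compactin[OF cK _ closedin_closure_of])
  moreover have "topspace betaM = P closure_of (ev ` Mtilde)"
    unfolding betaM_def P_def[symmetric] topspace_subtopology
    by (rule Int_absorb1[OF closure_of_subset_topspace])
  ultimately show ?thesis unfolding betaM_def P_def[symmetric] by (simp add: compactin_subtopology)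
qed

lemma quot_open:
  "openin (quotient_top X f) S \<longleftrightarrow> S \<subseteq> f ` topspace X \<and> openin X {x \<in> topspace X. f x \<in> S}"
proof -
  have "istopology (\<lambda>U. U \<subseteq> f ` topspace X \<and> openin X {x \<in> topspace X. f x \<in> U})"
    unfolding istopology_def
  proof (rule conjI; intro allI impI)
    fix S T assume a: "S \<subseteq> f ` topspace X \<and> openin X {x \<in> topspace X. f x \<in> S}"
       "T \<subseteq> f ` topspace X \<and> openin X {x \<in> topspace X. f x \<in> T}"
    have "{x \<in> topspace X. f x \<in> S \<inter> T} = {x \<in> topspace X. f x \<in> S} \<inter> {x \<in> topspace X. f x \<in> T}" by auto
    then show "S \<inter> T \<subseteq> f ` topspace X \<and> openin X {x \<in> topspace X. f x \<in> S \<inter> T}"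
      using a by auto
  next
    fix KK assume a: "\<forall>K\<in>KK. K \<subseteq> f ` topspace X \<and> openin X {x \<in> topspace X. f x \<in> K}"
    have "{x \<in> topspace X. f x \<in> \<Union>KK} = \<Union>((\<lambda>K. {x \<in> topspace X. f x \<in> K}) ` KK)" by auto
    then show "\<Union>KK \<subseteq> f ` topspace X \<and> openin X {x \<in> topspace X. f x \<in> \<Union>KK}"
      using a by (auto intro!: openin_Union)
  qed
  then show ?thesis unfolding quotient_top_def by simp
qed

lemma quot_topspace: "topspace (quotient_top X f) = f ` topspace X"
proof -
  have e: "{x \<in> topspace X. f x \<in> f ` topspace X} = topspace X" by auto
  have "openin (quotient_top X f) (f ` topspace X)" unfolding quot_open e by simp
  then have b: "f ` topspace X \<subseteq> topspace (quotient_top X f)" by (rule openin_subset)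
  have a: "topspace (quotient_top X f) \<subseteq> f ` topspace X"
    using openin_topspace[of "quotient_top X f"] unfolding quot_open by (elim conjE)
  show ?thesis by (rule subset_antisym[OF a b])
qed

lemma quot_cont: "continuous_map X (quotient_top X f) f"
  unfolding continuous_map_def quot_topspace using quot_open by blast

section \<open>Positive functionals\<close>

context
  fixes X :: "'b topology" and I :: "('b \<Rightarrow> real) \<Rightarrow> real"
  assumes pr: "positive_radon X I"
begin

lemma pr_add: "continuous_map X euclideanreal f \<Longrightarrow> continuous_map X euclideanreal g \<Longrightarrow>
    I (\<lambda>x. f x + g x) = I f + I g"
  using pr unfolding positive_radon_def by blast

lemma pr_scale: "continuous_map X euclideanreal f \<Longrightarrow> I (\<lambda>x. c * f x) = c * I f"
  using pr unfolding positive_radon_def by blast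

lemma pr_pos: "continuous_map X euclideanreal f \<Longrightarrow> (\<forall>x\<in>topspace X. 0 \<le> f x) \<Longrightarrow> 0 \<le> I f"
  using pr unfolding positive_radon_def by blast

lemma pr_diff:
  assumes f: "continuous_map X euclideanreal f" and g: "continuous_map X euclideanreal g"
  shows "I (\<lambda>x. f x - g x) = I f - I g"
proof -
  have g': "continuous_map X euclideanreal (\<lambda>x. -1 * g x)"
    using g by (rule continuous_map_real_mult_left)
  have "I (\<lambda>x. f x + -1 * g x) = I f + I (\<lambda>x. -1 * g x)" by (rule pr_add[OF f g'])
  also have "I (\<lambda>x. -1 * g x) = -1 * I g" by (rule pr_scale[OF g])
  finally show ?thesis by simp
qed

lemma pr_const: "I (\<lambda>x. c) = c * I (\<lambda>x. 1)"
  using pr_scale[of "\<lambda>x. 1" c] by simp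

lemma pr_mono:
  assumes f: "continuous_map X euclideanreal f" and g: "continuous_map X euclideanreal g"
    and le: "\<forall>x\<in>topspace X. f x \<le> g x"
  shows "I f \<le> I g"
proof -
  have "0 \<le> I (\<lambda>x. g x - f x)"
    using le by (intro pr_pos continuous_map_diff f g) auto
  then show ?thesis using pr_diff[OF g f] by simp
qed

lemma pr_eq:
  assumes f: "continuous_map X euclideanreal f" and g: "continuous_map X euclideanreal g"
    and e: "\<forall>x\<in>topspace X. f x = g x"
  shows "I f = I g"
  using pr_mono[OF f g] pr_mono[OF g f] e by force

lemma pr_bound:
  assumes f: "continuous_map X euclideanreal f" and b: "\<forall>x\<in>topspace X. \<bar>f x\<bar> \<le> e"
  shows "\<bar>I f\<bar> \<le> e * I (\<lambda>x. 1)"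
proof -
  have "I (\<lambda>x. - e) \<le> I f" using b by (intro pr_mono f) auto
  moreover have "I f \<le> I (\<lambda>x. e)" using b by (intro pr_mono f) auto
  ultimately show ?thesis using pr_const[of e] pr_const[of "-e"] by auto
qed

end
section \<open>The cone G and its difference lattice\<close>

lemma G_cont: "g \<in> Gset \<Longrightarrow> continuous_map betaM euclideanreal g"
  unfolding Gset_def Cbeta_def by auto

lemma G_const: "0 \<le> c \<Longrightarrow> (\<lambda>_. c) \<in> (Gset :: (((('a::metric_space \<times> 'a) \<Rightarrow> real) \<Rightarrow> real) \<Rightarrow> real) set)"
  unfolding Gset_def Cbeta_def
  by (auto intro!: mult_right_mono dist_triangle simp flip: distrib_right)

lemma GsetI:
  assumes "continuous_map betaM euclideanreal g"
    and "\<And>x u y::'a::metric_space. x \<noteq> u \<Longrightarrow> u \<noteq> y \<Longrightarrow> x \<noteq> y \<Longrightarrow>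
      dist x y * g (ev (x, y)) \<le> dist x u * g (ev (x, u)) + dist u y * g (ev (u, y))"
  shows "g \<in> Gset"
  using assms unfolding Gset_def Cbeta_def by auto

lemma GsetD:
  assumes "g \<in> Gset" "x \<noteq> u" "u \<noteq> y" "x \<noteq> y"
  shows "dist x y * g (ev (x, y)) \<le> dist x u * g (ev (x, u)) + dist u y * g (ev (u, y))"
  using assms unfolding Gset_def by auto

lemma G_add: "g \<in> Gset \<Longrightarrow> h \<in> Gset \<Longrightarrow> (\<lambda>z. g z + h z) \<in> Gset"
proof (rule GsetI)
  assume g: "g \<in> Gset" and h: "h \<in> Gset"
  then show "continuous_map betaM euclideanreal (\<lambda>z. g z + h z)"
    by (intro continuous_map_add G_cont)
  fix x u y :: 'a assume d: "x \<noteq> u" "u \<noteq> y" "x \<noteq> y"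
  show "dist x y * (g (ev (x, y)) + h (ev (x, y))) \<le> dist x u * (g (ev (x, u)) + h (ev (x, u))) + dist u y * (g (ev (u, y)) + h (ev (u, y)))"
    using GsetD[OF g d] GsetD[OF h d] by (simp add: distrib_left)
qed

lemma G_max: "g \<in> Gset \<Longrightarrow> h \<in> Gset \<Longrightarrow> (\<lambda>z. max (g z) (h z)) \<in> Gset"
proof (rule GsetI)
  assume g: "g \<in> Gset" and h: "h \<in> Gset"
  then show "continuous_map betaM euclideanreal (\<lambda>z. max (g z) (h z))"
    by (intro continuous_map_real_max G_cont)
  fix x u y :: 'a assume d: "x \<noteq> u" "u \<noteq> y" "x \<noteq> y"
  have 1: "dist x u * g (ev (x, u)) \<le> dist x u * max (g (ev (x, u))) (h (ev (x, u)))"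
          "dist x u * h (ev (x, u)) \<le> dist x u * max (g (ev (x, u))) (h (ev (x, u)))"
          "dist u y * g (ev (u, y)) \<le> dist u y * max (g (ev (u, y))) (h (ev (u, y)))"
          "dist u y * h (ev (u, y)) \<le> dist u y * max (g (ev (u, y))) (h (ev (u, y)))"
    by (auto intro: mult_left_mono)
  have 2: "dist x y * max (g (ev (x, y))) (h (ev (x, y))) = dist x y * g (ev (x, y)) \<or>
           dist x y * max (g (ev (x, y))) (h (ev (x, y))) = dist x y * h (ev (x, y))"
    by (simp add: max_def)
  show "dist x y * max (g (ev (x, y))) (h (ev (x, y))) \<le> dist x u * max (g (ev (x, u))) (h (ev (x, u))) + dist u y * max (g (ev (u, y))) (h (ev (u, y)))"
    using GsetD[OF g d] GsetD[OF h d] 1 2 by linarith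
qed

lemma G_scale: "g \<in> Gset \<Longrightarrow> 0 \<le> c \<Longrightarrow> (\<lambda>z. c * g z) \<in> Gset"
proof (rule GsetI)
  assume g: "g \<in> Gset" and c: "0 \<le> c"
  then show "continuous_map betaM euclideanreal (\<lambda>z. c * g z)"
    by (intro continuous_map_real_mult_left G_cont)
  fix x u y :: 'a assume d: "x \<noteq> u" "u \<noteq> y" "x \<noteq> y"
  have "c * (dist x y * g (ev (x, y))) \<le> c * (dist x u * g (ev (x, u)) + dist u y * g (ev (u, y)))"
    using GsetD[OF g d] c by (intro mult_left_mono) auto
  then show "dist x y * (c * g (ev (x, y))) \<le> dist x u * (c * g (ev (x, u))) + dist u y * (c * g (ev (u, y)))"
    by (simp add: algebra_simps)
qed

definition Lset :: "(((('a::metric_space \<times> 'a) \<Rightarrow> real) \<Rightarrow> real) \<Rightarrow> real) set" where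
  "Lset = {h. \<exists>g1 g2. g1 \<in> Gset \<and> g2 \<in> Gset \<and> h = (\<lambda>z. g1 z - g2 z)}"

lemma LI: "g1 \<in> Gset \<Longrightarrow> g2 \<in> Gset \<Longrightarrow> h = (\<lambda>z. g1 z - g2 z) \<Longrightarrow> h \<in> Lset"
  unfolding Lset_def by blast

lemma L_cont: "h \<in> Lset \<Longrightarrow> continuous_map betaM euclideanreal h"
proof -
  assume "h \<in> Lset"
  then obtain g1 g2 where g: "g1 \<in> Gset" "g2 \<in> Gset"
    and e: "h = (\<lambda>z. g1 z - g2 z)" unfolding Lset_def by blast
  show ?thesis unfolding e by (intro continuous_map_diff G_cont g)
qed

lemma G_L: "g \<in> Gset \<Longrightarrow> g \<in> Lset"
  by (rule LI[of g "\<lambda>_. 0"]) (auto intro: G_const)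

lemma L_const: "(\<lambda>_. c) \<in> Lset"
proof (cases "0 \<le> c")
  case True
  show ?thesis
    by (rule LI[of "\<lambda>_. c" "\<lambda>_. 0"]) (use \<open>0 \<le> c\<close> in \<open>auto intro: G_const\<close>)
next
  case False
  show ?thesis
    by (rule LI[of "\<lambda>_. 0" "\<lambda>_. - c"]) (use \<open>\<not> 0 \<le> c\<close> in \<open>auto intro: G_const\<close>)
qed

lemma L_add: "h \<in> Lset \<Longrightarrow> k \<in> Lset \<Longrightarrow> (\<lambda>z. h z + k z) \<in> Lset"
proof -
  assume "h \<in> Lset" "k \<in> Lset"
  then obtain g1 g2 f1 f2 where g: "g1 \<in> Gset" "g2 \<in> Gset" "f1 \<in> Gset" "f2 \<in> Gset"
    and e: "h = (\<lambda>z. g1 z - g2 z)" "k = (\<lambda>z. f1 z - f2 z)" unfolding Lset_def by blast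
  show ?thesis 
    by (rule LI[of "\<lambda>z. g1 z + f1 z" "\<lambda>z. g2 z + f2 z"])
      (auto simp: e intro: G_add g)
qed

lemma L_scale: "h \<in> Lset \<Longrightarrow> (\<lambda>z. c * h z) \<in> Lset"
proof -
  assume "h \<in> Lset"
  then obtain g1 g2 where g: "g1 \<in> Gset" "g2 \<in> Gset"
    and e: "h = (\<lambda>z. g1 z - g2 z)" unfolding Lset_def by blast
  show ?thesis
  proof (cases "0 \<le> c")
    case True
    show ?thesis
    by (rule LI[of "\<lambda>z. c * g1 z" "\<lambda>z. c * g2 z"]) (use \<open>0 \<le> c\<close> in \<open>auto simp: e algebra_simps intro: G_scale g\<close>)
  next
    case False
    show ?thesis
    proof (rule LI[of "\<lambda>z. (-c) * g2 z" "\<lambda>z. (-c) * g1 z"])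
      show "(\<lambda>z. (-c) * g2 z) \<in> Gset" using \<open>\<not> 0 \<le> c\<close> by (intro G_scale g) auto
      show "(\<lambda>z. (-c) * g1 z) \<in> Gset" using \<open>\<not> 0 \<le> c\<close> by (intro G_scale g) auto
      show "(\<lambda>z. c * h z) = (\<lambda>z. - c * g2 z - - c * g1 z)" by (auto simp: e algebra_simps)
    qed
  qed
qed

lemma L_max: "h \<in> Lset \<Longrightarrow> k \<in> Lset \<Longrightarrow> (\<lambda>z. max (h z) (k z)) \<in> Lset"
proof -
  assume "h \<in> Lset" "k \<in> Lset"
  then obtain g1 g2 f1 f2 where g: "g1 \<in> Gset" "g2 \<in> Gset" "f1 \<in> Gset" "f2 \<in> Gset"
    and e: "h = (\<lambda>z. g1 z - g2 z)" "k = (\<lambda>z. f1 z - f2 z)" unfolding Lset_def by blast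
  have "(\<lambda>z. max (h z) (k z)) = (\<lambda>z. max (g1 z + f2 z) (f1 z + g2 z) - (g2 z + f2 z))"
    by (auto simp: e max_def fun_eq_iff)
  moreover have "(\<lambda>z. max (g1 z + f2 z) (f1 z + g2 z)) \<in> Gset"
    by (intro G_max G_add g)
  moreover have "(\<lambda>z. g2 z + f2 z) \<in> Gset" by (intro G_add g)
  ultimately show ?thesis unfolding Lset_def by blast
qed

lemma L_min: "h \<in> Lset \<Longrightarrow> k \<in> Lset \<Longrightarrow> (\<lambda>z. min (h z) (k z)) \<in> Lset"
proof -
  assume "h \<in> Lset" "k \<in> Lset"
  then have "(\<lambda>z. -1 * max (-1 * h z) (-1 * k z)) \<in> Lset"
    by (intro L_scale L_max)
  moreover have "(\<lambda>z. -1 * max (-1 * h z) (-1 * k z)) = (\<lambda>z. min (h z) (k z))"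
    by (auto simp: fun_eq_iff max_def min_def)
  ultimately show ?thesis by simp
qed

lemma L_Min: "finite F \<Longrightarrow> F \<noteq> {} \<Longrightarrow> F \<subseteq> Lset \<Longrightarrow> (\<lambda>z. Min ((\<lambda>h. h z) ` F)) \<in> Lset"
proof (induction F rule: finite_ne_induct)
  case (singleton x)
  then show ?case by simp
next
  case (insert x F)
  have "(\<lambda>z. min (x z) (Min ((\<lambda>h. h z) ` F))) \<in> Lset"
    using insert by (intro L_min) auto
  moreover have "(\<lambda>z. Min ((\<lambda>h. h z) ` insert x F)) = (\<lambda>z. min (x z) (Min ((\<lambda>h. h z) ` F)))"
    using insert by (auto simp: fun_eq_iff)
  ultimately show ?case by simp
qed

lemma L_Max: "finite F \<Longrightarrow> F \<noteq> {} \<Longrightarrow> F \<subseteq> Lset \<Longrightarrow> (\<lambda>z. Max ((\<lambda>h. h z) ` F)) \<in> Lset"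
proof (induction F rule: finite_ne_induct)
  case (singleton x)
  then show ?case by simp
next
  case (insert x F)
  have "(\<lambda>z. max (x z) (Max ((\<lambda>h. h z) ` F))) \<in> Lset"
    using insert by (intro L_max) auto
  moreover have "(\<lambda>z. Max ((\<lambda>h. h z) ` insert x F)) = (\<lambda>z. max (x z) (Max ((\<lambda>h. h z) ` F)))"
    using insert by (auto simp: fun_eq_iff)
  ultimately show ?case by simp
qed
section \<open>Lattice approximation\<close>

lemma Gequiv_sym: "Gequiv a b \<Longrightarrow> Gequiv b a"
  unfolding Gequiv_def by auto

lemma interp:
  assumes phi: "\<And>a b. a \<in> topspace betaM \<Longrightarrow> b \<in> topspace betaM \<Longrightarrow> Gequiv a b \<Longrightarrow> \<phi> a = (\<phi> b::real)"
    and a: "a \<in> topspace betaM" and b: "b \<in> topspace betaM"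
  shows "\<exists>h\<in>(Lset :: (((('a::metric_space \<times> 'a) \<Rightarrow> real) \<Rightarrow> real) \<Rightarrow> real) set). h a = \<phi> a \<and> h b = \<phi> b"
proof (cases "Gequiv a b")
  case True
  then show ?thesis using phi[OF a b] L_const[of "\<phi> a"] by auto
next
  case False
  then obtain g where g: "g \<in> Gset" "g a \<noteq> g b" unfolding Gequiv_def by auto
  define c where "c = (\<phi> b - \<phi> a) / (g b - g a)"
  have "(\<lambda>z. c * g z + (\<phi> a - c * g a)) \<in> Lset"
    by (rule L_add[OF L_scale[OF G_L[OF g(1)]] L_const])
  moreover have "c * g b + (\<phi> a - c * g a) = \<phi> b"
  proof -
    have "g b - g a \<noteq> 0" using g(2) by simp
    then have "c * (g b - g a) = \<phi> b - \<phi> a" unfolding c_def by simp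
    then show ?thesis by (simp add: algebra_simps)
  qed
  ultimately show ?thesis by (intro bexI[of _ "\<lambda>z. c * g z + (\<phi> a - c * g a)"]) auto
qed

lemma open_lt:
  assumes "continuous_map X euclideanreal f" "continuous_map X euclideanreal g"
  shows "openin X {x \<in> topspace X. f x < (g x::real)}"
proof -
  have "openin X {x \<in> topspace X. (\<lambda>x. g x - f x) x \<in> {0<..}}"
    by (rule openin_continuous_map_preimage) (auto intro: continuous_map_diff assms)
  then show ?thesis by simp
qed

lemma approx:
  assumes phic: "continuous_map betaM euclideanreal \<phi>"
    and phi: "\<And>a b. a \<in> topspace betaM \<Longrightarrow> b \<in> topspace betaM \<Longrightarrow> Gequiv a b \<Longrightarrow> \<phi> a = \<phi> b"
    and e: "0 < e"
  shows "\<exists>h\<in>(Lset :: (((('a::metric_space \<times> 'a) \<Rightarrow> real) \<Rightarrow> real) \<Rightarrow> real) set).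
           \<forall>x\<in>topspace betaM. \<bar>\<phi> x - h x\<bar> < e"
proof -
  let ?T = "topspace (betaM :: ((('a \<times> 'a) \<Rightarrow> real) \<Rightarrow> real) topology)"
  have cpt: "compactin betaM ?T" by (rule betaM_compact)
  have stepB: "\<exists>k\<in>(Lset :: (((('a \<times> 'a) \<Rightarrow> real) \<Rightarrow> real) \<Rightarrow> real) set).
       k z = \<phi> z \<and> (\<forall>x\<in>?T. k x < \<phi> x + e)" if z: "z \<in> ?T" for z
  proof -
    have "\<forall>w\<in>?T. \<exists>h\<in>(Lset :: (((('a \<times> 'a) \<Rightarrow> real) \<Rightarrow> real) \<Rightarrow> real) set). h z = \<phi> z \<and> h w = \<phi> w"
      using interp[where \<phi>=\<phi>, OF phi z] by blast
    then obtain H where H: "\<And>w. w \<in> ?T \<Longrightarrow> H w \<in> Lset \<and> H w z = \<phi> z \<and> H w w = \<phi> w"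
      by metis
    define U where "U = (\<lambda>w. {x \<in> ?T. H w x < \<phi> x + e})"
    have "openin betaM (U w)" if w: "w \<in> ?T" for w
      unfolding U_def
      by (intro open_lt L_cont[of "H w"] continuous_map_add phic) (auto simp: H w)
    then have "\<forall>C\<in>U ` ?T. openin betaM C" by blast
    moreover have "?T \<subseteq> \<Union>(U ` ?T)" unfolding U_def using H e by auto
    ultimately obtain F where F: "finite F" "F \<subseteq> U ` ?T" "?T \<subseteq> \<Union>F"
      using cpt unfolding compactin_def by meson
    then obtain W where W: "W \<subseteq> ?T" "finite W" "F = U ` W"
      by (meson finite_subset_image)
    have Wne: "W \<noteq> {}" using W F z by auto
    define k where "k = (\<lambda>x. Min ((\<lambda>h. h x) ` (H ` W)))"
    have "k \<in> Lset" unfolding k_def using W Wne H by (intro L_Min) auto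
    moreover have "k z = \<phi> z"
    proof -
      have "(\<lambda>h. h z) ` (H ` W) = (\<lambda>_. \<phi> z) ` W"
        unfolding image_image using W H by (intro image_cong) auto
      also have "\<dots> = {\<phi> z}" using Wne by auto
      finally have "(\<lambda>h. h z) ` (H ` W) = {\<phi> z}" .
      then show ?thesis unfolding k_def by simp
    qed
    moreover have "k x < \<phi> x + e" if x: "x \<in> ?T" for x
    proof -
      obtain w where w: "w \<in> W" "x \<in> U w" using F W x by auto
      have "k x \<le> H w x" unfolding k_def using W w by (intro Min_le) auto
      then show ?thesis using w unfolding U_def by auto
    qed
    ultimately show ?thesis by blast
  qed
  show ?thesis
  proof (cases "?T = {}")
    case True
    then show ?thesis using L_const by blast
  next
    case Tne: False
    from stepB obtain K where K: "\<And>z. z \<in> ?T \<Longrightarrow> K z \<in> Lset \<and> K z z = \<phi> z \<and> (\<forall>x\<in>?T. K z x < \<phi> x + e)"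
      by metis
    define V where "V = (\<lambda>z. {x \<in> ?T. \<phi> x - e < K z x})"
    have "openin betaM (V w)" if w: "w \<in> ?T" for w
      unfolding V_def
      by (intro open_lt L_cont[of "K w"] continuous_map_diff phic) (auto simp: K w)
    then have "\<forall>C\<in>V ` ?T. openin betaM C" by blast
    moreover have "?T \<subseteq> \<Union>(V ` ?T)" unfolding V_def using K e by auto
    ultimately obtain F where F: "finite F" "F \<subseteq> V ` ?T" "?T \<subseteq> \<Union>F"
      using cpt unfolding compactin_def by meson
    then obtain W where W: "W \<subseteq> ?T" "finite W" "F = V ` W"
      by (meson finite_subset_image)
    have Wne: "W \<noteq> {}" using W F Tne by auto
    define m where "m = (\<lambda>x. Max ((\<lambda>h. h x) ` (K ` W)))"
    have "m \<in> Lset" unfolding m_def using W Wne K by (intro L_Max) auto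
    moreover have "\<bar>\<phi> x - m x\<bar> < e" if x: "x \<in> ?T" for x
    proof -
      obtain w where w: "w \<in> W" "x \<in> V w" using F W x by auto
      have "K w x \<le> m x" unfolding m_def using W w by (intro Max_ge) auto
      then have 1: "\<phi> x - e < m x" using w unfolding V_def by auto
      have "m x \<in> (\<lambda>h. h x) ` (K ` W)" unfolding m_def using W Wne by (intro Max_in) auto
      then obtain w' where "w' \<in> W" "m x = K w' x" by auto
      then have 2: "m x < \<phi> x + e" using K W x by auto
      show ?thesis using 1 2 by auto
    qed
    ultimately show ?thesis by blast
  qed
qed

lemma small_zero:
  fixes d C :: real
  assumes "0 \<le> C" "\<And>e. 0 < e \<Longrightarrow> \<bar>d\<bar> \<le> e * C"
  shows "d = 0"
proof (rule ccontr)
  assume "d \<noteq> 0"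
  then have "\<bar>d\<bar> \<le> (\<bar>d\<bar> / (C + 1)) * C" using assms(1) by (intro assms(2)) auto
  moreover have "(\<bar>d\<bar> / (C + 1)) * C < \<bar>d\<bar>"
    using \<open>d \<noteq> 0\<close> assms(1) by (simp add: field_simps)
  ultimately show False by simp
qed

lemma qmap_eq:
  assumes "a \<in> topspace betaM" "b \<in> topspace betaM" "Gequiv a b"
  shows "qmap a = qmap b"
proof -
  have ab: "\<forall>g\<in>Gset. g a = g b" using assms(3) unfolding Gequiv_def .
  have "(\<forall>g\<in>Gset. g a = g w) \<longleftrightarrow> (\<forall>g\<in>Gset. g b = g w)" for w
    using ab by metis
  then show ?thesis unfolding qmap_def Gequiv_def by simp
qed

lemma qmap_self: "a \<in> topspace betaM \<Longrightarrow> a \<in> qmap a"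
  unfolding qmap_def Gequiv_def by auto

lemma qmap_cont: "continuous_map betaM MG qmap"
  unfolding MG_def by (rule quot_cont)

lemma agree_on_L:
  assumes mu: "positive_radon betaM \<mu>" and nu: "positive_radon betaM \<nu>"
    and G: "\<forall>g\<in>Gset. \<mu> g = \<nu> g" and h: "h \<in> Lset"
  shows "\<mu> h = \<nu> h"
proof -
  obtain g1 g2 where g: "g1 \<in> Gset" "g2 \<in> Gset" and e: "h = (\<lambda>z. g1 z - g2 z)"
    using h unfolding Lset_def by blast
  show ?thesis unfolding e
    using pr_diff[OF mu G_cont[OF g(1)] G_cont[OF g(2)]] pr_diff[OF nu G_cont[OF g(1)] G_cont[OF g(2)]]
      G g by simp
qed
theorem proposition3p3:
  fixes \<mu> \<nu> :: "((((('a::complete_space \<times> 'a) \<Rightarrow> real) \<Rightarrow> real) \<Rightarrow> real) \<Rightarrow> real)"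
    and x0 :: 'a
  assumes three: "\<exists>a b c::'a. a \<noteq> b \<and> b \<noteq> c \<and> a \<noteq> c"
    and mu: "positive_radon betaM \<mu>"
    and nu: "positive_radon betaM \<nu>"
  shows "(preceq \<mu> \<nu> \<and> preceq \<nu> \<mu>) \<longleftrightarrow>
         (\<forall>f. continuous_map MG euclideanreal f \<longrightarrow> push \<mu> f = push \<nu> f)"
proof
  assume H: "preceq \<mu> \<nu> \<and> preceq \<nu> \<mu>"
  then have G: "\<forall>g\<in>Gset. \<mu> g = \<nu> g" unfolding preceq_def by (auto intro: antisym)
  show "\<forall>f. continuous_map MG euclideanreal f \<longrightarrow> push \<mu> f = push \<nu> f"
  proof (intro allI impI)
    fix f :: "((('a \<times> 'a) \<Rightarrow> real) \<Rightarrow> real) set \<Rightarrow> real"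
    assume f: "continuous_map MG euclideanreal f"
    define \<phi> where "\<phi> = f \<circ> qmap"
    have phic: "continuous_map betaM euclideanreal \<phi>"
      unfolding \<phi>_def by (rule continuous_map_compose[OF qmap_cont f])
    have phi: "\<And>a b. a \<in> topspace betaM \<Longrightarrow> b \<in> topspace betaM \<Longrightarrow> Gequiv a b \<Longrightarrow> \<phi> a = \<phi> b"
      unfolding \<phi>_def comp_def by (simp add: qmap_eq)
    have C: "0 \<le> \<mu> (\<lambda>x. 1) + \<nu> (\<lambda>x. 1)"
      using pr_pos[OF mu, of "\<lambda>x. 1"] pr_pos[OF nu, of "\<lambda>x. 1"] by simp
    have "\<mu> \<phi> - \<nu> \<phi> = 0"
    proof (rule small_zero[OF C])
      fix e :: real assume e: "0 < e"
      obtain h where h: "h \<in> Lset" "\<forall>x\<in>topspace betaM. \<bar>\<phi> x - h x\<bar> < e"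
        using approx[OF phic phi e] by blast
      have hc: "continuous_map betaM euclideanreal h" by (rule L_cont[OF h(1)])
      have dc: "continuous_map betaM euclideanreal (\<lambda>x. \<phi> x - h x)"
        by (intro continuous_map_diff phic hc)
      have hb: "\<forall>x\<in>topspace betaM. \<bar>\<phi> x - h x\<bar> \<le> e" using h(2) by (auto intro: less_imp_le)
      have b1: "\<bar>\<mu> (\<lambda>x. \<phi> x - h x)\<bar> \<le> e * \<mu> (\<lambda>x. 1)" by (rule pr_bound[OF mu dc hb])
      have b2: "\<bar>\<nu> (\<lambda>x. \<phi> x - h x)\<bar> \<le> e * \<nu> (\<lambda>x. 1)" by (rule pr_bound[OF nu dc hb])
      have d1: "\<mu> (\<lambda>x. \<phi> x - h x) = \<mu> \<phi> - \<mu> h" by (rule pr_diff[OF mu phic hc])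
      have d2: "\<nu> (\<lambda>x. \<phi> x - h x) = \<nu> \<phi> - \<nu> h" by (rule pr_diff[OF nu phic hc])
      have eq: "\<mu> h = \<nu> h" by (rule agree_on_L[OF mu nu G h(1)])
      show "\<bar>\<mu> \<phi> - \<nu> \<phi>\<bar> \<le> e * (\<mu> (\<lambda>x. 1) + \<nu> (\<lambda>x. 1))"
      proof -
        have "\<bar>\<mu> \<phi> - \<nu> \<phi>\<bar> = \<bar>\<mu> (\<lambda>x. \<phi> x - h x) - \<nu> (\<lambda>x. \<phi> x - h x)\<bar>"
          using d1 d2 eq by simp
        also have "\<dots> \<le> \<bar>\<mu> (\<lambda>x. \<phi> x - h x)\<bar> + \<bar>\<nu> (\<lambda>x. \<phi> x - h x)\<bar>"
          by (rule abs_triangle_ineq4)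
        also have "\<dots> \<le> e * \<mu> (\<lambda>x. 1) + e * \<nu> (\<lambda>x. 1)"
          using b1 b2 by (rule add_mono)
        finally show ?thesis by (simp add: distrib_left)
      qed
    qed
    then show "push \<mu> f = push \<nu> f" unfolding push_def \<phi>_def by simp
  qed
next
  assume P: "\<forall>f. continuous_map MG euclideanreal f \<longrightarrow> push \<mu> f = push \<nu> f"
  have G: "\<mu> g = \<nu> g" if g: "g \<in> Gset" for g
  proof -
    define f where "f = (\<lambda>U. g (SOME w. w \<in> U))"
    have fq: "f (qmap z) = g z" if z: "z \<in> topspace betaM" for z
    proof -
      have "\<exists>w. w \<in> qmap z" using qmap_self[OF z] by blast
      then have "(SOME w. w \<in> qmap z) \<in> qmap z" by (rule someI_ex)
      then have "Gequiv z (SOME w. w \<in> qmap z)" unfolding qmap_def by simp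
      then have "g z = g (SOME w. w \<in> qmap z)" using g unfolding Gequiv_def by blast
      then show ?thesis by (simp add: f_def)
    qed
    have topMG: "topspace MG = qmap ` topspace betaM" unfolding MG_def by (rule quot_topspace)
    have openMG: "openin MG S \<longleftrightarrow> S \<subseteq> qmap ` topspace betaM \<and> openin betaM {x \<in> topspace betaM. qmap x \<in> S}" for S
      unfolding MG_def by (rule quot_open)
    have fc: "continuous_map MG euclideanreal f"
      unfolding continuous_map_def
    proof (intro conjI allI impI)
      show "f \<in> topspace MG \<rightarrow> topspace euclideanreal" by simp
      fix V :: "real set" assume V: "openin euclideanreal V"
      have o: "openin betaM {x \<in> topspace betaM. g x \<in> V}"
        by (rule openin_continuous_map_preimage[OF G_cont[OF g] V])
      have e: "{x \<in> topspace betaM. qmap x \<in> {U \<in> topspace MG. f U \<in> V}} = {x \<in> topspace betaM. g x \<in> V}"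
        unfolding topMG using fq by auto
      show "openin MG {U \<in> topspace MG. f U \<in> V}"
        unfolding openMG e using o topMG by auto
    qed
    have fqc: "continuous_map betaM euclideanreal (f \<circ> qmap)"
      by (rule continuous_map_compose[OF qmap_cont fc])
    have agree: "\<forall>x\<in>topspace betaM. (f \<circ> qmap) x = g x" using fq by simp
    have "push \<mu> f = push \<nu> f" using P fc by blast
    moreover have "push \<mu> f = \<mu> g" unfolding push_def by (rule pr_eq[OF mu fqc G_cont[OF g] agree])
    moreover have "push \<nu> f = \<nu> g" unfolding push_def by (rule pr_eq[OF nu fqc G_cont[OF g] agree])
    ultimately show ?thesis by simp
  qed
  then show "preceq \<mu> \<nu> \<and> preceq \<nu> \<mu>" unfolding preceq_def by simp
qed

end
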